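(* Let $k\ge 2$ and $s\ge 0$ be integers, and let $a_{n,m}$ be the number of ways to place $s$ pairwise non-overlapping $k$-mers on the $n\times m$ rectangular lattice with open boundary conditions in both directions. Then for $n\ge (k+1)s+1$ and $m\ge (k+1)s+1$, $$\sum_{i=0}^{2s+1}(-1)^i\binom{2s+1}{i}a_{n-i,m-i}=0.$$
   Context: The lattice is $\{1,\dots,n\}\times\{1,\dots,m\}$ with open boundaries. A $k$-mer occupies $k$ consecutive sites in one row or one column; a configuration is a set of $s$ $k$-mers with pairwise disjoint site sets. *)

theory Defs
  imports Main
begin

definition lattice :: "nat \<Rightarrow> nat \<Rightarrow> (nat \<times> nat) set" where
  "lattice n m = {1..n} \<times> {1..m}"

definition kmers :: "nat \<Rightarrow> nat \<Rightarrow> nat \<Rightarrow> (nat \<times> nat) set set" where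
  "kmers k n m =
     {S. S \<subseteq> lattice n m \<and>
         (\<exists>i j. S = {(i, j + t) | t. t < k} \<or> S = {(i + t, j) | t. t < k})}"

definition configs :: "nat \<Rightarrow> nat \<Rightarrow> nat \<Rightarrow> nat \<Rightarrow> (nat \<times> nat) set set set" where
  "configs k s n m =
     {C. C \<subseteq> kmers k n m \<and> finite C \<and> card C = s \<and>
         (\<forall>A\<in>C. \<forall>B\<in>C. A \<noteq> B \<longrightarrow> A \<inter> B = {})}"

definition num_configs :: "nat \<Rightarrow> nat \<Rightarrow> nat \<Rightarrow> nat \<Rightarrow> nat" where
  "num_configs k s n m = card (configs k s n m)"

end

theory Submission
  imports Defs
begin

definition fd :: "(nat \<Rightarrow> int) \<Rightarrow> nat \<Rightarrow> int" where
  "fd f x = f (Suc x) - f x"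

lemma fd_Suc: "(fd ^^ Suc j) f x = (fd ^^ j) f (Suc x) - (fd ^^ j) f x"
  by (simp add: fd_def)

lemma fd_shift: "(fd ^^ j) (\<lambda>t. f (t + c)) = (\<lambda>t. (fd ^^ j) f (t + c))"
  by (induction j) (auto simp: fd_def)

lemma fd_sub:
  assumes "t \<ge> d"
  shows "(fd ^^ j) (\<lambda>u. f (u - d)) t = (fd ^^ j) f (t - d)"
proof -
  have "(fd ^^ j) (\<lambda>u. (\<lambda>u. f (u - d)) (u + d)) = (\<lambda>u. (fd ^^ j) (\<lambda>u. f (u - d)) (u + d))"
    by (rule fd_shift)
  then have "(fd ^^ j) f = (\<lambda>u. (fd ^^ j) (\<lambda>u. f (u - d)) (u + d))" by simp
  then have "(fd ^^ j) f (t - d) = (fd ^^ j) (\<lambda>u. f (u - d)) (t - d + d)" by simp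
  then show ?thesis using assms by simp
qed

lemma fd_sum: "(fd ^^ j) (\<lambda>t. \<Sum>i\<in>I. f i t) = (\<lambda>t. \<Sum>i\<in>I. (fd ^^ j) (f i) t)"
  by (induction j) (auto simp: fd_def sum_subtractf)

lemma fd_cmult: "(fd ^^ j) (\<lambda>t. c * f t) = (\<lambda>t. c * (fd ^^ j) f t)"
  by (induction j) (auto simp: fd_def right_diff_distrib)

lemma fd_agree:
  assumes "\<forall>t\<ge>N. f t = g t" "t \<ge> N"
  shows "(fd ^^ j) f t = (fd ^^ j) g t"
  using assms(2)
proof (induction j arbitrary: t)
  case 0 then show ?case using assms(1) by simp
next
  case (Suc j) then show ?case by (simp add: fd_def)
qed

lemma fd_zero_mono:
  assumes "\<forall>t\<ge>N. (fd ^^ j) f t = 0" "i \<ge> j" "t \<ge> N"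
  shows "(fd ^^ i) f t = 0"
  using assms(2,3)
proof (induction i arbitrary: t rule: dec_induct)
  case base then show ?case using assms(1) by simp
next
  case (step i) then show ?case by (simp add: fd_def)
qed

lemma fd_expand:
  "(fd ^^ j) f x = (\<Sum>i\<le>j. (-1) ^ (j - i) * int (j choose i) * f (x + i))"
proof (induction j arbitrary: x)
  case 0 then show ?case by simp
next
  case (Suc j)
  define a where "a i = (-1::int) ^ (j - i) * int (j choose i)" for i
  define b where "b i = (-1::int) ^ (Suc j - i) * int (j choose i) * f (x + i)" for i
  have IH1: "(fd ^^ j) f (Suc x) = (\<Sum>i\<le>j. a i * f (x + Suc i))"
    using Suc by (simp add: a_def)
  have IH2: "(fd ^^ j) f x = (\<Sum>i\<le>j. a i * f (x + i))"
    using Suc by (simp add: a_def)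
  have bsum: "(\<Sum>i\<le>Suc j. b i) = - (\<Sum>i\<le>j. a i * f (x + i))"
  proof -
    have "(\<Sum>i\<le>Suc j. b i) = (\<Sum>i\<le>j. b i)" by (simp add: b_def)
    also have "\<dots> = (\<Sum>i\<le>j. - (a i * f (x + i)))"
      by (rule sum.cong) (auto simp: a_def b_def Suc_diff_le)
    finally show ?thesis by (simp add: sum_negf)
  qed
  have "(\<Sum>i\<le>Suc j. b i) = b 0 + (\<Sum>i\<le>j. b (Suc i))"
    by (rule sum.atMost_Suc_shift)
  then have bshift: "(\<Sum>i\<le>j. b (Suc i)) = - (\<Sum>i\<le>j. a i * f (x + i)) - b 0"
    using bsum by simp
  have "(\<Sum>i\<le>Suc j. (-1) ^ (Suc j - i) * int (Suc j choose i) * f (x + i))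
      = (-1) ^ Suc j * f x + (\<Sum>i\<le>j. (-1) ^ (j - i) * int (Suc j choose Suc i) * f (x + Suc i))"
    by (subst sum.atMost_Suc_shift) simp
  also have "(\<Sum>i\<le>j. (-1) ^ (j - i) * int (Suc j choose Suc i) * f (x + Suc i))
      = (\<Sum>i\<le>j. a i * f (x + Suc i)) + (\<Sum>i\<le>j. b (Suc i))"
    by (simp add: a_def b_def sum.distrib[symmetric] algebra_simps)
  finally have R: "(\<Sum>i\<le>Suc j. (-1) ^ (Suc j - i) * int (Suc j choose i) * f (x + i))
     = (-1) ^ Suc j * f x + ((\<Sum>i\<le>j. a i * f (x + Suc i)) + (\<Sum>i\<le>j. b (Suc i)))" .
  show ?case unfolding fd_Suc IH1 IH2 R bshift by (simp add: b_def)
qed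

definition d1 :: "(nat \<Rightarrow> nat \<Rightarrow> int) \<Rightarrow> nat \<Rightarrow> nat \<Rightarrow> int" where
  "d1 F = (\<lambda>x y. F (Suc x) y - F x y)"
definition d2 :: "(nat \<Rightarrow> nat \<Rightarrow> int) \<Rightarrow> nat \<Rightarrow> nat \<Rightarrow> int" where
  "d2 F = (\<lambda>x y. F x (Suc y) - F x y)"
definition e2 :: "(nat \<Rightarrow> nat \<Rightarrow> int) \<Rightarrow> nat \<Rightarrow> nat \<Rightarrow> int" where
  "e2 F = (\<lambda>x y. F x (Suc y))"
definition dd :: "(nat \<Rightarrow> nat \<Rightarrow> int) \<Rightarrow> nat \<Rightarrow> nat \<Rightarrow> int" where
  "dd F = (\<lambda>x y. F (Suc x) (Suc y) - F x y)"

lemma d1_e2: "(d1 ^^ p) (e2 F) = e2 ((d1 ^^ p) F)"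
  by (induction p) (auto simp: d1_def e2_def)
lemma d1_d2: "(d1 ^^ p) (d2 F) = d2 ((d1 ^^ p) F)"
  by (induction p) (auto simp: d1_def d2_def algebra_simps)
lemma d2_e2: "(d2 ^^ p) (e2 F) = e2 ((d2 ^^ p) F)"
  by (induction p) (auto simp: d2_def e2_def)
lemma d2_d1: "(d2 ^^ p) (d1 F) = d1 ((d2 ^^ p) F)"
  by (induction p) (auto simp: d1_def d2_def algebra_simps)
lemma dd_add: "(dd ^^ j) (\<lambda>x y. G x y + H x y) = (\<lambda>x y. (dd ^^ j) G x y + (dd ^^ j) H x y)"
  by (induction j) (auto simp: dd_def algebra_simps)
lemma dd_zero: "(dd ^^ j) (\<lambda>x y. 0) = (\<lambda>x y. 0)"
  by (induction j) (auto simp: dd_def algebra_simps)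
lemma dd_split: "dd F = (\<lambda>x y. e2 (d1 F) x y + d2 F x y)"
  by (auto simp: dd_def e2_def d1_def d2_def)
lemma e2_zero: "e2 (\<lambda>x y. 0) = (\<lambda>x y. 0)" by (simp add: e2_def)
lemma d1_zero: "d1 (\<lambda>x y. 0) = (\<lambda>x y. 0)" by (simp add: d1_def)
lemma d2_zero: "d2 (\<lambda>x y. 0) = (\<lambda>x y. 0)" by (simp add: d2_def)

lemma diag_main:
  "(d1 ^^ p) F = (\<lambda>x y. 0) \<Longrightarrow> (d2 ^^ q) F = (\<lambda>x y. 0) \<Longrightarrow> (dd ^^ (p + q - 1)) F = (\<lambda>x y. 0)"
proof (induction p arbitrary: q F)
  case 0 then show ?case by (simp add: dd_zero)
next
  case (Suc p)
  note IHp = Suc.IH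
  show ?case using Suc.prems
  proof (induction q arbitrary: F)
    case 0 then show ?case by (simp add: dd_zero)
  next
    case (Suc q)
    note IHq = Suc.IH
    have A: "(d1 ^^ p) (e2 (d1 F)) = (\<lambda>x y. 0)"
    proof -
      have "(d1 ^^ p) (d1 F) = (d1 ^^ Suc p) F" by (simp only: funpow_Suc_right o_apply)
      then show ?thesis using Suc.prems(1) by (simp add: d1_e2 e2_zero del: funpow.simps)
    qed
    have B: "(d2 ^^ Suc q) (e2 (d1 F)) = (\<lambda>x y. 0)"
      using Suc.prems(2) by (simp add: d2_e2 d2_d1 e2_zero d1_zero del: funpow.simps)
    have C: "(d1 ^^ Suc p) (d2 F) = (\<lambda>x y. 0)"
      using Suc.prems(1) by (simp add: d1_d2 d2_zero del: funpow.simps)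
    have D: "(d2 ^^ q) (d2 F) = (\<lambda>x y. 0)"
    proof -
      have "(d2 ^^ q) (d2 F) = (d2 ^^ Suc q) F" by (simp only: funpow_Suc_right o_apply)
      then show ?thesis using Suc.prems(2) by simp
    qed
    have E1: "(dd ^^ (p + Suc q - 1)) (e2 (d1 F)) = (\<lambda>x y. 0)" using IHp[OF A B] .
    have E2: "(dd ^^ (Suc p + q - 1)) (d2 F) = (\<lambda>x y. 0)"
    proof (cases q)
      case 0 then show ?thesis using D by (simp add: dd_zero)
    next
      case (Suc q')
      then show ?thesis using IHq[OF C D] by simp
    qed
    have "(dd ^^ (Suc p + Suc q - 1)) F = (dd ^^ (p + q)) (dd F)"
      by (simp add: funpow_Suc_right del: funpow.simps)
    also have "\<dots> = (\<lambda>x y. 0)"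
      using E1 E2 by (simp add: dd_split dd_add)
    finally show ?case .
  qed
qed

lemma d1_fd: "(d1 ^^ p) F x y = (fd ^^ p) (\<lambda>t. F t y) x"
  by (induction p arbitrary: x) (auto simp: d1_def fd_def)
lemma d2_fd: "(d2 ^^ p) F x y = (fd ^^ p) (\<lambda>t. F x t) y"
  by (induction p arbitrary: y) (auto simp: d2_def fd_def)
lemma dd_fd: "(dd ^^ j) F x y = (fd ^^ j) (\<lambda>t. F (x + t) (y + t)) 0"
proof (induction j arbitrary: x y)
  case 0 then show ?case by simp
next
  case (Suc j)
  have "(fd ^^ j) (\<lambda>t. F (x + (t + 1)) (y + (t + 1))) 0 = (fd ^^ j) (\<lambda>t. F (x + t) (y + t)) (0 + 1)"
    using fd_shift[of j "\<lambda>t. F (x+t) (y+t)" 1] by (rule fun_cong)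
  then have "(fd ^^ j) (\<lambda>t. F (x + t) (y + t)) (Suc 0) = (fd ^^ j) (\<lambda>t. F (Suc (x + t)) (Suc (y + t))) 0"
    by simp
  moreover have "(dd ^^ Suc j) F x y = (dd ^^ j) F (Suc x) (Suc y) - (dd ^^ j) F x y"
    by (simp add: dd_def)
  moreover have "(fd ^^ Suc j) (\<lambda>t. F (x + t) (y + t)) 0 = (fd ^^ j) (\<lambda>t. F (x + t) (y + t)) (Suc 0) - (fd ^^ j) (\<lambda>t. F (x + t) (y + t)) 0"
    by (rule fd_Suc)
  ultimately show ?case using Suc.IH by simp
qed

definition crosses :: "(nat \<times> nat) set \<Rightarrow> nat \<Rightarrow> bool" where
  "crosses A r \<longleftrightarrow> (\<exists>x\<in>A. \<exists>y\<in>A. fst x \<le> r \<and> r < fst y)"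

definition pdisj :: "(nat \<times> nat) set set \<Rightarrow> bool" where
  "pdisj C \<longleftrightarrow> (\<forall>A\<in>C. \<forall>B\<in>C. A \<noteq> B \<longrightarrow> A \<inter> B = {})"

lemma configs_alt: "configs k s n m = {C. C \<subseteq> kmers k n m \<and> finite C \<and> card C = s \<and> pdisj C}"
  by (simp add: configs_def pdisj_def)

lemma kmer_cases:
  assumes "A \<in> kmers k n m"
  obtains i j where "A = {(i, j + t) | t. t < k}" | i j where "A = {(i + t, j) | t. t < k}"
  using assms unfolding kmers_def by blast

lemma kmer_lat:
  assumes "A \<in> kmers k n m" "x \<in> A"
  shows "1 \<le> fst x \<and> fst x \<le> n \<and> 1 \<le> snd x \<and> snd x \<le> m"
  using assms unfolding kmers_def lattice_def by (auto simp: mem_Times_iff)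

lemma kmer_ne:
  assumes "0 < k" "A \<in> kmers k n m"
  shows "A \<noteq> {}"
  using assms(2)
proof (cases rule: kmer_cases)
  case (1 i j) then show ?thesis using assms(1) by auto
next
  case (2 i j) then show ?thesis using assms(1) by auto
qed

lemma kmers_restrict:
  assumes "A \<in> kmers k N m" "\<forall>x\<in>A. fst x \<le> p"
  shows "A \<in> kmers k p m"
proof -
  have "A \<subseteq> lattice p m"
  proof
    fix x assume "x \<in> A"
    then show "x \<in> lattice p m" using kmer_lat[OF assms(1)] assms(2)
      by (cases x) (auto simp: lattice_def)
  qed
  then show ?thesis using assms(1) unfolding kmers_def by blast
qed

lemma kmers_mono:
  assumes "p \<le> N" "A \<in> kmers k p m"
  shows "A \<in> kmers k N m"
proof -
  have "A \<subseteq> lattice N m"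
  proof
    fix x assume "x \<in> A"
    then have "1 \<le> fst x \<and> fst x \<le> p \<and> 1 \<le> snd x \<and> snd x \<le> m" using kmer_lat[OF assms(2)] by blast
    then show "x \<in> lattice N m" using assms(1)
      by (cases x) (auto simp: lattice_def)
  qed
  then show ?thesis using assms(2) unfolding kmers_def by blast
qed

lemma finite_kmers: "finite (kmers k n m)"
proof -
  have "kmers k n m \<subseteq> Pow (lattice n m)" unfolding kmers_def by auto
  moreover have "finite (lattice n m)" unfolding lattice_def by simp
  ultimately show ?thesis by (meson finite_Pow_iff finite_subset)
qed

lemma finite_configs: "finite (configs k s n m)"
proof -
  have "configs k s n m \<subseteq> Pow (kmers k n m)" unfolding configs_def by auto
  then show ?thesis using finite_kmers by (meson finite_Pow_iff finite_subset)
qed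

lemma crosses_H: "\<not> crosses {(i, j + t) | t. t < k} r"
  unfolding crosses_def by auto

lemma crosses_V:
  assumes "0 < k"
  shows "{r. crosses {(i + t, j) | t. t < k} r} = {i..<i + k - 1}"
proof (intro set_eqI iffI)
  fix r assume "r \<in> {r. crosses {(i + t, j) | t. t < k} r}"
  then show "r \<in> {i..<i + k - 1}" unfolding crosses_def by auto
next
  fix r assume r: "r \<in> {i..<i + k - 1}"
  have x: "(i + 0, j) \<in> {(i + t, j) | t. t < k}" using assms by auto
  have y: "(i + (k - 1), j) \<in> {(i + t, j) | t. t < k}"
  proof -
    have "k - 1 < k" using assms by simp
    then show ?thesis by blast
  qed
  have "crosses {(i + t, j) | t. t < k} r" unfolding crosses_def
    by (rule bexI[OF _ x], rule bexI[OF _ y]) (use r assms in auto)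
  then show "r \<in> {r. crosses {(i + t, j) | t. t < k} r}" by simp
qed

lemma crosses_card:
  assumes "0 < k" "A \<in> kmers k n m"
  shows "finite {r. crosses A r} \<and> card {r. crosses A r} \<le> k - 1"
  using assms(2)
proof (cases rule: kmer_cases)
  case (1 i j) then show ?thesis using crosses_H by simp
next
  case (2 i j) then show ?thesis using crosses_V[OF assms(1)] by simp
qed

definition sh :: "nat \<Rightarrow> (nat \<times> nat) set \<Rightarrow> (nat \<times> nat) set" where
  "sh p A = (\<lambda>x. (fst x + p, snd x)) ` A"

lemma inj_sh: "inj (sh p)"
proof -
  have "inj (\<lambda>x::nat\<times>nat. (fst x + p, snd x))" by (auto simp: inj_def prod_eq_iff)
  then show ?thesis unfolding sh_def inj_def using inj_image_eq_iff by blast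
qed

lemma sh_kmer:
  assumes "A \<in> kmers k h m"
  shows "sh p A \<in> kmers k (h + p) m"
proof -
  have lat: "sh p A \<subseteq> lattice (h + p) m"
    using kmer_lat[OF assms] unfolding sh_def lattice_def by (fastforce simp: mem_Times_iff)
  from assms show ?thesis
  proof (cases rule: kmer_cases)
    case (1 i j)
    then have "sh p A = {(i + p, j + t) | t. t < k}" unfolding sh_def by (auto intro!: image_eqI)
    then show ?thesis using lat unfolding kmers_def by blast
  next
    case (2 i j)
    then have "sh p A = {(i + p + t, j) | t. t < k}" unfolding sh_def by (auto intro!: image_eqI)
    then show ?thesis using lat unfolding kmers_def by blast
  qed
qed

lemma unsh_kmer:
  assumes k: "0 < k" and A: "A \<in> kmers k N m" and rows: "\<forall>x\<in>A. p < fst x"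
  shows "\<exists>A0 \<in> kmers k (N - p) m. A = sh p A0"
proof -
  define A0 where "A0 = (\<lambda>x. (fst x - p, snd x)) ` A"
  have "sh p A0 = A"
  proof -
    have "sh p A0 = (\<lambda>x. (fst x - p + p, snd x)) ` A" unfolding sh_def A0_def image_image by simp
    also have "\<dots> = (\<lambda>x. x) ` A" using rows by (intro image_cong) auto
    finally show ?thesis by simp
  qed
  have lat: "A0 \<subseteq> lattice (N - p) m"
    using kmer_lat[OF A] rows unfolding A0_def lattice_def by (fastforce simp: mem_Times_iff)
  have shape: "\<exists>i j. A0 = {(i, j + t) | t. t < k} \<or> A0 = {(i + t, j) | t. t < k}"
    using A
  proof (cases rule: kmer_cases)
    case (1 i j)
    then have "A0 = {(i - p, j + t) | t. t < k}" unfolding A0_def by (auto intro!: image_eqI)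
    then show ?thesis by blast
  next
    case (2 i j)
    have "(i + 0, j) \<in> A" using 2 k by blast
    then have ip: "p < i" using rows by auto
    have "A0 = {(i - p + t, j) | t. t < k}" unfolding A0_def 2 using ip by (auto intro!: image_eqI)
    then show ?thesis by blast
  qed
  have "A0 \<in> kmers k (N - p) m" using lat shape unfolding kmers_def by blast
  then show ?thesis using \<open>sh p A0 = A\<close> by blast
qed

lemma crosses_sh: "crosses (sh p A) (r + p) \<longleftrightarrow> crosses A r"
  unfolding crosses_def sh_def by auto

lemma crosses_sh_ge: "crosses (sh p A) r \<Longrightarrow> p \<le> r"
  unfolding crosses_def sh_def by auto

lemma pdisj_sh: "pdisj (sh p ` B) \<longleftrightarrow> pdisj B"
proof -
  have "sh p X \<inter> sh p Y = sh p (X \<inter> Y)" for X Y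
    unfolding sh_def by (rule image_Int[symmetric]) (auto simp: inj_def prod_eq_iff)
  note I = this
  have E: "sh p X = {} \<longleftrightarrow> X = {}" for X unfolding sh_def by simp
  have Q: "sh p X = sh p Y \<longleftrightarrow> X = Y" for X Y using inj_sh by (auto simp: inj_def)
  have "pdisj (sh p ` B) \<longleftrightarrow> (\<forall>A\<in>B. \<forall>A'\<in>B. sh p A \<noteq> sh p A' \<longrightarrow> sh p A \<inter> sh p A' = {})"
    unfolding pdisj_def by blast
  then show ?thesis unfolding pdisj_def I E Q .
qed

definition Blk :: "nat \<Rightarrow> nat \<Rightarrow> nat \<Rightarrow> nat \<Rightarrow> nat \<Rightarrow> (nat \<times> nat) set set set" where
  "Blk k m c p N = {B. B \<subseteq> kmers k N m \<and> (\<forall>A\<in>B. \<forall>x\<in>A. p < fst x) \<and> finite B \<and> card B = c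
      \<and> pdisj B \<and> (\<forall>r. p < r \<and> r < N \<longrightarrow> (\<exists>A\<in>B. crosses A r))}"

lemma finite_Blk: "finite (Blk k m c p N)"
proof -
  have "Blk k m c p N \<subseteq> Pow (kmers k N m)" unfolding Blk_def by auto
  then show ?thesis using finite_kmers by (meson finite_Pow_iff finite_subset)
qed

lemma Blk_shift:
  assumes k: "0 < k" and pN: "p \<le> N"
  shows "Blk k m c p N = (\<lambda>B. sh p ` B) ` Blk k m c 0 (N - p)"
proof (intro set_eqI iffI)
  fix B' assume B': "B' \<in> Blk k m c p N"
  define B0 where "B0 = {A0 \<in> kmers k (N - p) m. sh p A0 \<in> B'}"
  have eq: "sh p ` B0 = B'"
  proof
    show "sh p ` B0 \<subseteq> B'" unfolding B0_def by auto
    show "B' \<subseteq> sh p ` B0"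
    proof
      fix A assume A: "A \<in> B'"
      then have "A \<in> kmers k N m" "\<forall>x\<in>A. p < fst x" using B' unfolding Blk_def by auto
      then obtain A0 where "A0 \<in> kmers k (N - p) m" "A = sh p A0" using unsh_kmer[OF k] by blast
      then show "A \<in> sh p ` B0" unfolding B0_def using A by blast
    qed
  qed
  have injB0: "inj_on (sh p) B0" using inj_sh by (auto simp: inj_on_def inj_def)
  have "B0 \<in> Blk k m c 0 (N - p)"
    unfolding Blk_def
  proof (intro CollectI conjI allI impI)
    show "B0 \<subseteq> kmers k (N - p) m" unfolding B0_def by auto
    show "\<forall>A\<in>B0. \<forall>x\<in>A. 0 < fst x" unfolding B0_def using kmer_lat by fastforce
    show fin: "finite B0" unfolding B0_def using finite_kmers by simp
    show "card B0 = c" using card_image[OF injB0] eq B' unfolding Blk_def by auto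
    show "pdisj B0" using B' eq pdisj_sh[of p B0] unfolding Blk_def by auto
    fix r assume r: "0 < r \<and> r < N - p"
    then have "p < r + p \<and> r + p < N" by auto
    then obtain A where "A \<in> B'" "crosses A (r + p)" using B' unfolding Blk_def by blast
    then obtain A0 where "A0 \<in> B0" "A = sh p A0" using eq by auto
    then show "\<exists>A\<in>B0. crosses A r" using crosses_sh \<open>crosses A (r + p)\<close> by blast
  qed
  then show "B' \<in> (\<lambda>B. sh p ` B) ` Blk k m c 0 (N - p)" using eq by blast
next
  fix B' assume "B' \<in> (\<lambda>B. sh p ` B) ` Blk k m c 0 (N - p)"
  then obtain B0 where B0: "B0 \<in> Blk k m c 0 (N - p)" and eq: "B' = sh p ` B0" by blast
  have injB0: "inj_on (sh p) B0" using inj_sh by (auto simp: inj_on_def inj_def)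
  show "B' \<in> Blk k m c p N"
    unfolding Blk_def
  proof (intro CollectI conjI allI impI)
    show "B' \<subseteq> kmers k N m" using B0 sh_kmer[of _ k "N - p" m p] pN unfolding eq Blk_def by auto
    show "\<forall>A\<in>B'. \<forall>x\<in>A. p < fst x" using B0 kmer_lat unfolding eq Blk_def sh_def by fastforce
    show "finite B'" using B0 unfolding eq Blk_def by auto
    show "card B' = c" using card_image[OF injB0] B0 unfolding eq Blk_def by auto
    show "pdisj B'" using B0 pdisj_sh[of p B0] unfolding eq Blk_def by auto
    fix r assume r: "p < r \<and> r < N"
    then have "0 < r - p \<and> r - p < N - p" by auto
    then obtain A where "A \<in> B0" "crosses A (r - p)" using B0 unfolding Blk_def by blast
    then have "crosses (sh p A) r" using crosses_sh[of p A "r - p"] r by simp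
    then show "\<exists>A\<in>B'. crosses A r" using \<open>A \<in> B0\<close> unfolding eq by blast
  qed
qed

lemma card_Blk_shift:
  assumes k: "0 < k" and pN: "p \<le> N"
  shows "card (Blk k m c p N) = card (Blk k m c 0 (N - p))"
proof -
  have i: "inj_on (\<lambda>B. sh p ` B) S" for S by (rule inj_onI) (simp add: inj_image_eq_iff[OF inj_sh])
  show ?thesis unfolding Blk_shift[OF assms] by (rule card_image[OF i])
qed

lemma union_props:
  assumes k: "0 < k" and B: "B \<in> Blk k m c p N" and C: "C' \<in> configs k s' p m" and pN: "p < N"
  shows "B \<union> C' \<in> configs k (c + s') N m"
    and "{A \<in> B \<union> C'. \<forall>x\<in>A. p < fst x} = B"
    and "{A \<in> B \<union> C'. \<not> (\<forall>x\<in>A. p < fst x)} = C'"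
    and "Max {r. r < N \<and> (\<forall>A\<in>B \<union> C'. \<not> crosses A r)} = p"
proof -
  have Bk: "B \<subseteq> kmers k N m" and Brows: "\<forall>A\<in>B. \<forall>x\<in>A. p < fst x" and Bfin: "finite B"
    and Bcard: "card B = c" and Bdisj: "pdisj B" and Bcross: "\<forall>r. p < r \<and> r < N \<longrightarrow> (\<exists>A\<in>B. crosses A r)"
    using B unfolding Blk_def by auto
  have Ck: "C' \<subseteq> kmers k p m" and Cfin: "finite C'" and Ccard: "card C' = s'" and Cdisj: "pdisj C'"
    using C unfolding configs_alt by auto
  have Crows: "\<forall>A\<in>C'. \<forall>x\<in>A. fst x \<le> p" using Ck kmer_lat by blast
  have Cne: "\<forall>A\<in>C'. A \<noteq> {}" using Ck kmer_ne[OF k] by blast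
  have Cnot: "\<forall>A\<in>C'. \<not> (\<forall>x\<in>A. p < fst x)"
  proof
    fix A assume "A \<in> C'"
    then obtain x where "x \<in> A" using Cne by blast
    then show "\<not> (\<forall>x\<in>A. p < fst x)" using Crows \<open>A \<in> C'\<close> by fastforce
  qed
  show "{A \<in> B \<union> C'. \<forall>x\<in>A. p < fst x} = B" using Brows Cnot by blast
  show "{A \<in> B \<union> C'. \<not> (\<forall>x\<in>A. p < fst x)} = C'" using Brows Cnot by blast
  have BC: "B \<inter> C' = {}" using Brows Cnot by blast
  have "B \<union> C' \<subseteq> kmers k N m" using Bk Ck kmers_mono[of p N _ k m] pN by auto
  moreover have "finite (B \<union> C')" using Bfin Cfin by simp
  moreover have "card (B \<union> C') = c + s'" using card_Un_disjoint[OF Bfin Cfin BC] Bcard Ccard by simp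
  moreover have "pdisj (B \<union> C')"
    unfolding pdisj_def
  proof (intro ballI impI)
    fix A1 A2 assume A1: "A1 \<in> B \<union> C'" and A2: "A2 \<in> B \<union> C'" and ne: "A1 \<noteq> A2"
    have mix: "X \<inter> Y = {}" if "X \<in> B" "Y \<in> C'" for X Y
    proof -
      have "\<forall>x\<in>X. p < fst x" "\<forall>x\<in>Y. fst x \<le> p" using that Brows Crows by auto
      then show ?thesis by fastforce
    qed
    show "A1 \<inter> A2 = {}"
      using A1 A2 ne Bdisj Cdisj mix[of A1 A2] mix[of A2 A1] unfolding pdisj_def by blast
  qed
  ultimately show "B \<union> C' \<in> configs k (c + s') N m" unfolding configs_alt by blast
  let ?S = "{r. r < N \<and> (\<forall>A\<in>B \<union> C'. \<not> crosses A r)}"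
  show "Max ?S = p"
  proof (rule Max_eqI)
    show "finite ?S" by (rule finite_subset[of _ "{..<N}"]) auto
    show "y \<le> p" if "y \<in> ?S" for y
    proof (rule ccontr)
      assume "\<not> y \<le> p"
      then have "p < y \<and> y < N" using that by auto
      then show False using Bcross that by blast
    qed
    have "\<not> crosses A p" if "A \<in> B \<union> C'" for A
    proof
      assume "crosses A p"
      then obtain x y where xy: "x \<in> A" "y \<in> A" "fst x \<le> p" "p < fst y" unfolding crosses_def by blast
      show False
      proof (cases "A \<in> B")
        case True then have "p < fst x" using Brows xy(1) by blast
        then show False using xy(3) by simp
      next
        case False then have "A \<in> C'" using that by blast
        then have "fst y \<le> p" using Crows xy(2) by blast
        then show False using xy(4) by simp
      qed
    qed
    then show "p \<in> ?S" using pN by blast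
  qed
qed

lemma decomp_cover:
  assumes k: "0 < k" and N: "0 < N" and C: "C \<in> configs k s N m"
  shows "\<exists>p<N. \<exists>c\<le>s. \<exists>B\<in>Blk k m c p N. \<exists>C'\<in>configs k (s - c) p m. C = B \<union> C'"
proof -
  have Ck: "C \<subseteq> kmers k N m" and Cfin: "finite C" and Ccard: "card C = s" and Cdisj: "pdisj C"
    using C unfolding configs_alt by auto
  define S where "S = {r. r < N \<and> (\<forall>A\<in>C. \<not> crosses A r)}"
  have Sfin: "finite S" unfolding S_def by (rule finite_subset[of _ "{..<N}"]) auto
  have "\<not> crosses A 0" if "A \<in> C" for A
    using that Ck kmer_lat unfolding crosses_def by fastforce
  then have "0 \<in> S" unfolding S_def using N by blast
  then have Sne: "S \<noteq> {}" by blast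
  define p where "p = Max S"
  have pS: "p \<in> S" unfolding p_def using Sfin Sne by simp
  have pmax: "\<And>r. r \<in> S \<Longrightarrow> r \<le> p" unfolding p_def using Sfin by simp
  have pN: "p < N" and pcut: "\<forall>A\<in>C. \<not> crosses A p" using pS unfolding S_def by auto
  define B where "B = {A \<in> C. \<forall>x\<in>A. p < fst x}"
  define C' where "C' = C - B"
  have low: "\<forall>x\<in>A. fst x \<le> p" if "A \<in> C'" for A
  proof -
    from that obtain x where x: "x \<in> A" "fst x \<le> p" unfolding C'_def B_def by auto
    have "A \<in> C" using that unfolding C'_def by auto
    show ?thesis
    proof (rule ccontr)
      assume "\<not> (\<forall>x\<in>A. fst x \<le> p)"
      then obtain y where "y \<in> A" "p < fst y" by auto
      then have "crosses A p" using x unfolding crosses_def by blast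
      then show False using pcut \<open>A \<in> C\<close> by blast
    qed
  qed
  have Bsub: "B \<subseteq> C" unfolding B_def by auto
  have Bfin: "finite B" using Cfin Bsub finite_subset by blast
  have cs: "card B \<le> s" using card_mono[OF Cfin Bsub] Ccard by simp
  have "B \<in> Blk k m (card B) p N"
    unfolding Blk_def
  proof (intro CollectI conjI allI impI)
    show "B \<subseteq> kmers k N m" using Bsub Ck by auto
    show "\<forall>A\<in>B. \<forall>x\<in>A. p < fst x" unfolding B_def by auto
    show "finite B" by (rule Bfin)
    show "card B = card B" ..
    show "pdisj B" using Cdisj Bsub unfolding pdisj_def by blast
    fix r assume r: "p < r \<and> r < N"
    then have "r \<notin> S" using pmax by fastforce
    then obtain A where A: "A \<in> C" "crosses A r" unfolding S_def using r by auto
    have "A \<in> B"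
    proof (rule ccontr)
      assume "A \<notin> B"
      then have "A \<in> C'" using A unfolding C'_def by auto
      then have "\<forall>x\<in>A. fst x \<le> p" by (rule low)
      then show False using A(2) r unfolding crosses_def by fastforce
    qed
    then show "\<exists>A\<in>B. crosses A r" using A by blast
  qed
  moreover have "C' \<in> configs k (s - card B) p m"
    unfolding configs_alt
  proof (intro CollectI conjI)
    show "C' \<subseteq> kmers k p m"
    proof
      fix A assume "A \<in> C'"
      then show "A \<in> kmers k p m" using low[OF \<open>A \<in> C'\<close>] Ck kmers_restrict unfolding C'_def by blast
    qed
    show "finite C'" unfolding C'_def using Cfin by simp
    show "card C' = s - card B" unfolding C'_def using card_Diff_subset[OF Bfin Bsub] Ccard by simp
    show "pdisj C'" using Cdisj unfolding pdisj_def C'_def by blast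
  qed
  moreover have "C = B \<union> C'" unfolding C'_def using Bsub by blast
  ultimately show ?thesis using pN cs by blast
qed

lemma card_rec:
  assumes k: "0 < k" and N: "0 < N"
  shows "num_configs k s N m = (\<Sum>p<N. \<Sum>c\<le>s. card (Blk k m c p N) * num_configs k (s - c) p m)"
proof -
  define X where "X p c = (\<lambda>(B, C'). B \<union> C') ` (Blk k m c p N \<times> configs k (s - c) p m)" for p c
  have eq: "configs k s N m = (\<Union>p\<in>{..<N}. \<Union>c\<in>{..s}. X p c)"
  proof
    show "configs k s N m \<subseteq> (\<Union>p\<in>{..<N}. \<Union>c\<in>{..s}. X p c)"
    proof
      fix C assume "C \<in> configs k s N m"
      then obtain p c B C' where "p < N" "c \<le> s" "B \<in> Blk k m c p N" "C' \<in> configs k (s - c) p m" "C = B \<union> C'"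
        using decomp_cover[OF k N] by blast
      then show "C \<in> (\<Union>p\<in>{..<N}. \<Union>c\<in>{..s}. X p c)" unfolding X_def by force
    qed
    show "(\<Union>p\<in>{..<N}. \<Union>c\<in>{..s}. X p c) \<subseteq> configs k s N m"
    proof
      fix C assume "C \<in> (\<Union>p\<in>{..<N}. \<Union>c\<in>{..s}. X p c)"
      then obtain p c B C' where "p < N" "c \<le> s" "B \<in> Blk k m c p N" "C' \<in> configs k (s - c) p m" "C = B \<union> C'"
        unfolding X_def by auto
      then show "C \<in> configs k s N m" using union_props(1)[OF k, of B m c p N C' "s - c"] by auto
    qed
  qed
  have finX: "finite (X p c)" for p c unfolding X_def using finite_Blk finite_configs by simp
  have cardX: "card (X p c) = card (Blk k m c p N) * num_configs k (s - c) p m" if "p < N" for p c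
  proof -
    have "inj_on (\<lambda>(B, C'). B \<union> C') (Blk k m c p N \<times> configs k (s - c) p m)"
    proof (rule inj_onI, clarify)
      fix B1 C1 B2 C2 assume 1: "B1 \<in> Blk k m c p N" "C1 \<in> configs k (s - c) p m"
        and 2: "B2 \<in> Blk k m c p N" "C2 \<in> configs k (s - c) p m" and e: "B1 \<union> C1 = B2 \<union> C2"
      show "B1 = B2 \<and> C1 = C2"
        using union_props(2,3)[OF k 1 that] union_props(2,3)[OF k 2 that] e by metis
    qed
    then show ?thesis unfolding X_def num_configs_def by (simp add: card_image card_cartesian_product)
  qed
  have disj_c: "X p c \<inter> X p c' = {}" if "p < N" "c \<noteq> c'" for p c c'
  proof (rule ccontr)
    assume "X p c \<inter> X p c' \<noteq> {}"
    then obtain B1 C1 B2 C2 where 1: "B1 \<in> Blk k m c p N" "C1 \<in> configs k (s - c) p m"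
        and 2: "B2 \<in> Blk k m c' p N" "C2 \<in> configs k (s - c') p m" and e: "B1 \<union> C1 = B2 \<union> C2"
      unfolding X_def by auto
    have "B1 = B2" using union_props(2)[OF k 1 that(1)] union_props(2)[OF k 2 that(1)] e by metis
    then show False using 1(1) 2(1) that(2) unfolding Blk_def by auto
  qed
  have disj_p: "(\<Union>c\<in>{..s}. X p c) \<inter> (\<Union>c\<in>{..s}. X p' c) = {}" if "p < N" "p' < N" "p \<noteq> p'" for p p'
  proof (rule ccontr)
    assume "(\<Union>c\<in>{..s}. X p c) \<inter> (\<Union>c\<in>{..s}. X p' c) \<noteq> {}"
    then obtain c c' B1 C1 B2 C2 where 1: "B1 \<in> Blk k m c p N" "C1 \<in> configs k (s - c) p m"
        and 2: "B2 \<in> Blk k m c' p' N" "C2 \<in> configs k (s - c') p' m" and e: "B1 \<union> C1 = B2 \<union> C2"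
      unfolding X_def by auto
    have "p = p'" using union_props(4)[OF k 1 that(1)] union_props(4)[OF k 2 that(2)] e by metis
    then show False using that(3) by simp
  qed
  have "num_configs k s N m = card (\<Union>p\<in>{..<N}. \<Union>c\<in>{..s}. X p c)"
    unfolding num_configs_def eq ..
  also have "\<dots> = (\<Sum>p<N. card (\<Union>c\<in>{..s}. X p c))"
    by (rule card_UN_disjoint) (use finX disj_p in auto)
  also have "\<dots> = (\<Sum>p<N. \<Sum>c\<le>s. card (X p c))"
    by (rule sum.cong[OF refl], rule card_UN_disjoint) (use finX disj_c in auto)
  also have "\<dots> = (\<Sum>p<N. \<Sum>c\<le>s. card (Blk k m c p N) * num_configs k (s - c) p m)"
    by (rule sum.cong[OF refl], rule sum.cong[OF refl]) (simp add: cardX)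
  finally show ?thesis .
qed

lemma Blk_empty_big:
  assumes k: "0 < k" and h: "c * (k - 1) + 1 < h"
  shows "Blk k m c 0 h = {}"
proof (rule ccontr)
  assume "Blk k m c 0 h \<noteq> {}"
  then obtain B where B: "B \<in> Blk k m c 0 h" by blast
  have Bk: "B \<subseteq> kmers k h m" and Bfin: "finite B" and Bcard: "card B = c"
    and Bcross: "\<forall>r. 0 < r \<and> r < h \<longrightarrow> (\<exists>A\<in>B. crosses A r)"
    using B unfolding Blk_def by auto
  have fin: "finite {r. crosses A r}" and cb: "card {r. crosses A r} \<le> k - 1" if "A \<in> B" for A
    using crosses_card[OF k] that Bk by blast+
  have sub: "{1..<h} \<subseteq> (\<Union>A\<in>B. {r. crosses A r})" using Bcross by fastforce
  have "h - 1 = card {1..<h}" by simp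
  also have "\<dots> \<le> card (\<Union>A\<in>B. {r. crosses A r})"
    by (rule card_mono[OF _ sub]) (use Bfin fin in auto)
  also have "\<dots> \<le> (\<Sum>A\<in>B. card {r. crosses A r})" by (rule card_UN_le[OF Bfin])
  also have "\<dots> \<le> (\<Sum>A\<in>B. k - 1)" by (rule sum_mono) (rule cb)
  also have "\<dots> = c * (k - 1)" using Bcard by simp
  finally show False using h by simp
qed

lemma Blk_0_1: "Blk k m 0 0 (Suc 0) = {{}}"
  unfolding Blk_def pdisj_def by auto

lemma pdisj_img:
  assumes "inj f"
  shows "pdisj ((\<lambda>A. f ` A) ` B) \<longleftrightarrow> pdisj B"
proof -
  have I: "f ` X \<inter> f ` Y = f ` (X \<inter> Y)" for X Y
    using assms by (simp add: image_Int)
  have E: "f ` X = {} \<longleftrightarrow> X = {}" for X by simp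
  have Q: "f ` X = f ` Y \<longleftrightarrow> X = Y" for X Y using inj_image_eq_iff[OF assms] .
  have "pdisj ((\<lambda>A. f ` A) ` B) \<longleftrightarrow> (\<forall>A\<in>B. \<forall>A'\<in>B. f ` A \<noteq> f ` A' \<longrightarrow> f ` A \<inter> f ` A' = {})"
    unfolding pdisj_def by blast
  then show ?thesis unfolding pdisj_def I E Q .
qed

lemma swap_kmer:
  assumes "A \<in> kmers k n m"
  shows "prod.swap ` A \<in> kmers k m n"
proof -
  have lat: "prod.swap ` A \<subseteq> lattice m n"
    using kmer_lat[OF assms] unfolding lattice_def by (fastforce simp: mem_Times_iff)
  from assms show ?thesis
  proof (cases rule: kmer_cases)
    case (1 i j)
    then have "prod.swap ` A = {(j + t, i) | t. t < k}" by (auto intro!: image_eqI)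
    then show ?thesis using lat unfolding kmers_def by blast
  next
    case (2 i j)
    then have "prod.swap ` A = {(j, i + t) | t. t < k}" by (auto intro!: image_eqI)
    then show ?thesis using lat unfolding kmers_def by blast
  qed
qed

lemma swap_config:
  assumes "C \<in> configs k s n m"
  shows "(\<lambda>A. prod.swap ` A) ` C \<in> configs k s m n"
proof -
  have i: "inj_on (\<lambda>A. prod.swap ` A) X" for X :: "(nat \<times> nat) set set"
    by (rule inj_onI) (simp add: inj_image_eq_iff)
  show ?thesis
    using assms swap_kmer pdisj_img[of prod.swap C] card_image[OF i]
    unfolding configs_alt by auto
qed

lemma num_configs_le:
  "num_configs k s n m \<le> num_configs k s m n"
proof -
  have i: "inj_on (\<lambda>A. prod.swap ` A) X" for X :: "(nat \<times> nat) set set"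
    by (rule inj_onI) (simp add: inj_image_eq_iff)
  have "inj_on (\<lambda>C. (\<lambda>A. prod.swap ` A) ` C) (configs k s n m)"
    by (rule inj_onI) (metis i inj_image_eq_iff inj_on_imageI2 inj_on_inverseI image_inv_into_cancel order_refl image_image)
  then show ?thesis unfolding num_configs_def
    by (rule card_inj_on_le) (use swap_config finite_configs in auto)
qed

lemma num_configs_sym: "num_configs k s n m = num_configs k s m n"
  using num_configs_le[of k s n m] num_configs_le[of k s m n] by simp

lemma rec_fd:
  assumes k: "0 < k"
  shows "int (num_configs k s (Suc n) m) - int (num_configs k s n m)
    = (\<Sum>h\<in>{1..Suc n}. \<Sum>c\<in>{1..s}. int (card (Blk k m c 0 h)) * int (num_configs k (s - c) (Suc n - h) m))"
proof -
  define T where "T h c = int (card (Blk k m c 0 h)) * int (num_configs k (s - c) (Suc n - h) m)" for h c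
  have "int (num_configs k s (Suc n) m)
      = (\<Sum>p<Suc n. \<Sum>c\<le>s. int (card (Blk k m c p (Suc n))) * int (num_configs k (s - c) p m))"
    unfolding card_rec[OF k zero_less_Suc[of n], of s m] by (simp only: of_nat_sum of_nat_mult)
  also have "\<dots> = (\<Sum>p<Suc n. \<Sum>c\<le>s. T (Suc n - p) c)"
  proof (rule sum.cong[OF refl], rule sum.cong[OF refl])
    fix p c assume "p \<in> {..<Suc n}"
    then have pn: "p \<le> Suc n" by simp
    show "int (card (Blk k m c p (Suc n))) * int (num_configs k (s - c) p m) = T (Suc n - p) c"
      unfolding T_def using card_Blk_shift[OF k pn, of m c] pn by simp
  qed
  also have "\<dots> = (\<Sum>h\<in>{1..Suc n}. \<Sum>c\<le>s. T h c)"
    by (rule sum.reindex_bij_witness[where i="\<lambda>h. Suc n - h" and j="\<lambda>p. Suc n - p"]) auto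
  also have "\<dots> = (\<Sum>h\<in>{1..Suc n}. T h 0 + (\<Sum>c\<in>{1..s}. T h c))"
  proof (rule sum.cong[OF refl])
    fix h
    have "{..s} = insert 0 {1..s}" by auto
    then show "(\<Sum>c\<le>s. T h c) = T h 0 + (\<Sum>c\<in>{1..s}. T h c)" by simp
  qed
  also have "\<dots> = (\<Sum>h\<in>{1..Suc n}. T h 0) + (\<Sum>h\<in>{1..Suc n}. \<Sum>c\<in>{1..s}. T h c)"
    by (rule sum.distrib)
  also have "(\<Sum>h\<in>{1..Suc n}. T h 0) = int (num_configs k s n m)"
  proof -
    have "{1..Suc n} = insert 1 {2..Suc n}" by auto
    moreover have T0: "T h 0 = 0" if "h \<in> {2..Suc n}" for h
      using that Blk_empty_big[OF k, of 0 h m] unfolding T_def by simp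
    ultimately have "(\<Sum>h\<in>{1..Suc n}. T h 0) = T 1 0 + (\<Sum>h\<in>{2..Suc n}. T h 0)"
      by (simp add: sum.insert)
    also have "(\<Sum>h\<in>{2..Suc n}. T h 0) = 0" using T0 by (intro sum.neutral ballI)
    finally show ?thesis by (simp add: T_def Blk_0_1)
  qed
  finally show ?thesis unfolding T_def by simp
qed

lemma oneD:
  assumes k: "2 \<le> k"
  shows "\<forall>n \<ge> (k - 1) * s. (fd ^^ Suc s) (\<lambda>n. int (num_configs k s n m)) n = 0"
proof (induction s rule: less_induct)
  case (less s)
  have k0: "0 < k" using k by simp
  define a where "a j n = int (num_configs k j n m)" for j n
  define g where "g c h = int (card (Blk k m c 0 h))" for c h
  define L where "L = (k - 1) * s + 1"
  define G where "G t = (\<Sum>h\<in>{1..L}. \<Sum>c\<in>{1..s}. g c h * a (s - c) (Suc t - h))" for t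
  have gz: "g c h = 0" if "c * (k - 1) + 1 < h" for c h
    using Blk_empty_big[OF k0 that] unfolding g_def by simp
  have step2: "fd (a s) t = G t" if t: "t \<ge> (k - 1) * s" for t
  proof -
    have "fd (a s) t = (\<Sum>h\<in>{1..Suc t}. \<Sum>c\<in>{1..s}. g c h * a (s - c) (Suc t - h))"
      unfolding fd_def a_def g_def using rec_fd[OF k0] by simp
    also have "\<dots> = G t"
      unfolding G_def
    proof (rule sum.mono_neutral_right)
      show "finite {1..Suc t}" by simp
      show "{1..L} \<subseteq> {1..Suc t}" using t unfolding L_def by auto
      show "\<forall>h\<in>{1..Suc t} - {1..L}. (\<Sum>c\<in>{1..s}. g c h * a (s - c) (Suc t - h)) = 0"
      proof
        fix h assume h: "h \<in> {1..Suc t} - {1..L}"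
        have "g c h = 0" if "c \<in> {1..s}" for c
        proof (rule gz)
          have "c * (k - 1) \<le> (k - 1) * s" using that mult_right_mono[of c s "k - 1"] by (simp add: mult.commute)
          moreover have "L < h" using h by auto
          ultimately show "c * (k - 1) + 1 < h" unfolding L_def by linarith
        qed
        then show "(\<Sum>c\<in>{1..s}. g c h * a (s - c) (Suc t - h)) = 0" by simp
      qed
    qed
    finally show ?thesis .
  qed
  show ?case
  proof (intro allI impI)
    fix n assume n: "(k - 1) * s \<le> n"
    have "(fd ^^ Suc s) (a s) n = (fd ^^ s) (fd (a s)) n"
      by (simp only: funpow_Suc_right o_apply)
    also have "\<dots> = (fd ^^ s) G n"
      by (rule fd_agree[where N="(k - 1) * s"]) (use step2 n in auto)
    also have "\<dots> = (\<Sum>h\<in>{1..L}. \<Sum>c\<in>{1..s}. g c h * (fd ^^ s) (\<lambda>t. a (s - c) (Suc t - h)) n)"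
      unfolding G_def fd_sum fd_cmult ..
    also have "\<dots> = 0"
    proof (intro sum.neutral ballI)
      fix h c assume h: "h \<in> {1..L}" and c: "c \<in> {1..s}"
      show "g c h * (fd ^^ s) (\<lambda>t. a (s - c) (Suc t - h)) n = 0"
      proof (cases "c * (k - 1) + 1 < h")
        case True then show ?thesis using gz by simp
      next
        case False
        then have hc: "h - 1 \<le> c * (k - 1)" by simp
        have hn: "h - 1 \<le> n" using h n unfolding L_def by auto
        have eqf: "(\<lambda>t. a (s - c) (Suc t - h)) = (\<lambda>t. a (s - c) (t - (h - 1)))"
          using h by (intro ext) (auto simp: Suc_diff_le)
        have "(fd ^^ s) (\<lambda>t. a (s - c) (Suc t - h)) n = (fd ^^ s) (a (s - c)) (n - (h - 1))"
          unfolding eqf by (rule fd_sub[OF hn])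
        also have "\<dots> = 0"
        proof (rule fd_zero_mono[where j="Suc (s - c)" and N="(k - 1) * (s - c)"])
          have "s - c < s" using c by auto
          then show "\<forall>t\<ge>(k - 1) * (s - c). (fd ^^ Suc (s - c)) (a (s - c)) t = 0"
            using less.IH unfolding a_def by blast
          show "Suc (s - c) \<le> s" using c by auto
          have "(k - 1) * s = (k - 1) * ((s - c) + c)" using c by simp
          then have "(k - 1) * (s - c) + c * (k - 1) = (k - 1) * s"
            by (simp only: add_mult_distrib2 mult.commute)
          then show "(k - 1) * (s - c) \<le> n - (h - 1)" using hc hn n by linarith
        qed
        finally show ?thesis by simp
      qed
    qed
    finally show "(fd ^^ Suc s) (\<lambda>n. int (num_configs k s n m)) n = 0"
      unfolding a_def .
  qed
qed

theorem corollary1: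
  fixes k s n m :: nat
  assumes "k \<ge> 2"
    and "n \<ge> (k + 1) * s + 1"
    and "m \<ge> (k + 1) * s + 1"
  shows "(\<Sum>i = 0..2 * s + 1. (-1::int) ^ i * int ((2 * s + 1) choose i)
            * int (num_configs k s (n - i) (m - i))) = 0"
proof -
  define T where "T = (k - 1) * s"
  define N where "N = 2 * s + 1"
  define F where "F x y = int (num_configs k s (T + x) (T + y))" for x y
  have D1: "(d1 ^^ Suc s) F = (\<lambda>x y. 0)"
  proof (intro ext)
    fix x y
    have "(d1 ^^ Suc s) F x y = (fd ^^ Suc s) (\<lambda>t. (\<lambda>n. int (num_configs k s n (T + y))) (t + T)) x"
      unfolding d1_fd F_def by (simp add: add.commute)
    also have "\<dots> = (fd ^^ Suc s) (\<lambda>n. int (num_configs k s n (T + y))) (x + T)"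
      using fd_shift[of "Suc s" "\<lambda>n. int (num_configs k s n (T + y))" T] by (rule fun_cong)
    also have "\<dots> = 0" using oneD[OF assms(1), of s "T + y"] unfolding T_def by simp
    finally show "(d1 ^^ Suc s) F x y = 0" .
  qed
  have D2: "(d2 ^^ Suc s) F = (\<lambda>x y. 0)"
  proof (intro ext)
    fix x y
    have "(d2 ^^ Suc s) F x y = (fd ^^ Suc s) (\<lambda>t. (\<lambda>n. int (num_configs k s n (T + x))) (t + T)) y"
      unfolding d2_fd F_def by (simp add: add.commute num_configs_sym[of k s "T + x"])
    also have "\<dots> = (fd ^^ Suc s) (\<lambda>n. int (num_configs k s n (T + x))) (y + T)"
      using fd_shift[of "Suc s" "\<lambda>n. int (num_configs k s n (T + x))" T] by (rule fun_cong)
    also have "\<dots> = 0" using oneD[OF assms(1), of s "T + x"] unfolding T_def by simp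
    finally show "(d2 ^^ Suc s) F x y = 0" .
  qed
  have DD: "(dd ^^ N) F = (\<lambda>x y. 0)"
    using diag_main[OF D1 D2] unfolding N_def by (simp add: mult_2)
  define x0 where "x0 = n - N - T"
  define y0 where "y0 = m - N - T"
  have nN: "N + T \<le> n" and mN: "N + T \<le> m"
    using assms unfolding N_def T_def by (auto simp: algebra_simps)
  have "0 = (dd ^^ N) F x0 y0" using DD by simp
  also have "\<dots> = (\<Sum>i\<le>N. (-1) ^ (N - i) * int (N choose i) * F (x0 + i) (y0 + i))"
    unfolding dd_fd fd_expand by simp
  also have "\<dots> = (\<Sum>i=0..N. (-1) ^ (N - i) * int (N choose i) * int (num_configs k s (n - (N - i)) (m - (N - i))))"
    unfolding atMost_atLeast0
    by (rule sum.cong[OF refl]) (use nN mN in \<open>auto simp: F_def x0_def y0_def\<close>)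
  also have "\<dots> = (\<Sum>i=0..N. (-1) ^ (N - (N + 0 - i)) * int (N choose (N + 0 - i))
        * int (num_configs k s (n - (N - (N + 0 - i))) (m - (N - (N + 0 - i)))))"
    by (rule sum.atLeastAtMost_rev)
  also have "\<dots> = (\<Sum>i=0..N. (-1::int) ^ i * int (N choose i) * int (num_configs k s (n - i) (m - i)))"
    by (rule sum.cong[OF refl]) (auto simp: binomial_symmetric[symmetric])
  finally show ?thesis unfolding N_def by simp
qed

end
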